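(* Let $\mathcal{K}=\mathbb{F}_q((t))$, $\mathcal{O}=\mathbb{F}_q[[t]]$ and $G=PGL(2,\mathcal{K})$. Let $B(\mathcal{K})\subset G$ be the subgroup of (classes of) upper triangular matrices, let $$I^0=\left\{\begin{pmatrix}1+ta & b\\ tc & 1+td\end{pmatrix} : a,b,c,d\in\mathcal{O}\right\}\subset G,$$ and let $A\subset G$ be the subgroup generated by $I^0$ and $\sigma=\begin{pmatrix}0&1\\ t&0\end{pmatrix}$. Then $PGL(2,\mathcal{K})=B(\mathcal{K})\cdot A$. *)

theory Defs
  imports "HOL-Analysis.Analysis" "HOL-Computational_Algebra.Formal_Laurent_Series"
begin

text \<open>Matrices over K = F_q((t)) are 2x2 matrices of formal Laurent series ('a fls ^2^2),
  with 'a a finite field F_q. t is fls_X. PGL(2,K) = GL(2,K) / scalars; statements about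
  PGL are stated via representatives in GL(2,K).\<close>

type_synonym 'a mat2 = "'a fls ^ 2 ^ 2"

definition mk2 :: "'a fls \<Rightarrow> 'a fls \<Rightarrow> 'a fls \<Rightarrow> 'a fls \<Rightarrow> 'a::field mat2" where
  "mk2 a b c d = vector [vector [a, b], vector [c, d]]"

definition val_ring :: "'a::field fls set" where
  "val_ring = {f. 0 \<le> fls_subdegree f}"

definition upper_tri :: "'a::field mat2 set" where
  "upper_tri = {M. invertible M \<and> M $ 2 $ 1 = 0}"

definition I0 :: "'a::field mat2 set" where
  "I0 = {mk2 (1 + fls_X * a) b (fls_X * c) (1 + fls_X * d) | a b c d.
           a \<in> val_ring \<and> b \<in> val_ring \<and> c \<in> val_ring \<and> d \<in> val_ring}"

definition sigma :: "'a::field mat2" where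
  "sigma = mk2 0 1 fls_X 0"

inductive_set gen_subgroup :: "'a::field mat2 set \<Rightarrow> 'a mat2 set" for S where
  gen_one: "mat 1 \<in> gen_subgroup S"
| gen_base: "s \<in> S \<Longrightarrow> s \<in> gen_subgroup S"
| gen_mult: "x \<in> gen_subgroup S \<Longrightarrow> y \<in> gen_subgroup S \<Longrightarrow> x ** y \<in> gen_subgroup S"
| gen_inv: "x \<in> gen_subgroup S \<Longrightarrow> x ** y = mat 1 \<Longrightarrow> y ** x = mat 1 \<Longrightarrow> y \<in> gen_subgroup S"

end

theory Submission
  imports Defs
begin

lemma mk2_nth [simp]:
  "mk2 a b c d $ 1 $ 1 = a" "mk2 a b c d $ 1 $ 2 = b"
  "mk2 a b c d $ 2 $ 1 = c" "mk2 a b c d $ 2 $ 2 = d"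
  by (simp_all add: mk2_def)

lemma mk2_eta: "(M::'a::field mat2) = mk2 (M$1$1) (M$1$2) (M$2$1) (M$2$2)"
  by (simp add: vec_eq_iff forall_2)

lemma mk2_mult:
  "(mk2 a b c d :: 'a::field mat2) ** mk2 e f g h
     = mk2 (a*e+b*g) (a*f+b*h) (c*e+d*g) (c*f+d*h)"
  by (simp add: matrix_matrix_mult_def vec_eq_iff forall_2 sum_2)

lemma mat1_mk2: "(mat 1 :: 'a::field mat2) = mk2 1 0 0 1"
  by (simp add: vec_eq_iff forall_2 mat_def)

lemma det_mk2: "det (mk2 a b c d :: 'a::field mat2) = a*d - b*c"
  by (simp add: det_2)

lemma finish:
  fixes g ainv a :: "'a::field mat2"
  assumes "invertible g" "ainv ** a = mat 1" "det ainv \<noteq> 0"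
    "(g ** ainv) $ 2 $ 1 = 0" "a \<in> gen_subgroup (I0 \<union> {sigma})"
  shows "\<exists>(c::'a fls) b a. c \<noteq> 0 \<and> b \<in> upper_tri \<and> a \<in> gen_subgroup (I0 \<union> {sigma})
           \<and> g = mat c ** b ** a"
proof (intro exI conjI)
  show "(1::'a fls) \<noteq> 0" by simp
  show "g ** ainv \<in> upper_tri" unfolding upper_tri_def
    using assms invertible_mult invertible_det_nz by blast
  show "a \<in> gen_subgroup (I0 \<union> {sigma})" by fact
  show "g = mat 1 ** (g ** ainv) ** a"
    by (metis matrix_mul_assoc matrix_mul_rid matrix_mul_lid assms(2))
qed

theorem mainTheorem2:
  fixes g :: "'a::{finite,field} mat2"
  assumes "invertible g"
  shows "\<exists>(c::'a fls) b a. c \<noteq> 0 \<and> b \<in> upper_tri \<and> a \<in> gen_subgroup (I0 \<union> {sigma})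
           \<and> g = mat c ** b ** a"
proof -
  define p where "p = g$1$1"
  define q where "q = g$1$2"
  define r where "r = g$2$1"
  define s where "s = g$2$2"
  have g: "g = mk2 p q r s" unfolding p_def q_def r_def s_def by (rule mk2_eta)
  have X: "(fls_X :: 'a fls) \<noteq> 0" by simp
  have rs: "r \<noteq> 0 \<or> s \<noteq> 0"
    using assms unfolding invertible_det_nz g det_mk2 by auto
  show ?thesis
  proof (cases "s \<noteq> 0 \<and> (r = 0 \<or> fls_subdegree r > fls_subdegree s)")
    case True
    define u where "u = r / s / fls_X"
    have u: "u \<in> val_ring"
    proof (cases "r = 0")
      case False
      then have "fls_subdegree u = fls_subdegree r - fls_subdegree s - 1"
        using True unfolding u_def by (simp add: fls_divide_subdegree)
      then show ?thesis using True False unfolding val_ring_def by simp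
    qed (simp add: u_def val_ring_def)
    have Xu: "fls_X * u = r / s" unfolding u_def using X
      by (metis nonzero_mult_div_cancel_left times_divide_eq_right)
    have "mk2 1 0 (fls_X * u) 1 \<in> I0" unfolding I0_def
      apply (rule CollectI, rule exI[of _ 0], rule exI[of _ 0], rule exI[of _ u], rule exI[of _ 0])
      using u by (simp add: val_ring_def)
    then have "mk2 1 0 (r/s) 1 \<in> I0" by (simp only: Xu)
    then have A: "mk2 1 0 (r/s) 1 \<in> gen_subgroup (I0 \<union> {sigma})"
      by (auto intro: gen_base)
    show ?thesis
      apply (rule finish[OF assms _ _ _ A, of "mk2 1 0 (-(r/s)) 1"])
      using True by (simp_all add: mk2_mult mat1_mk2 det_mk2 g)
  next
    case False
    then have F: "r \<noteq> 0" "s = 0 \<or> fls_subdegree s \<ge> fls_subdegree r" using rs by auto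
    define u where "u = s / r"
    have u: "u \<in> val_ring"
    proof (cases "s = 0")
      case False
      then have "fls_subdegree u = fls_subdegree s - fls_subdegree r"
        using F unfolding u_def by (simp add: fls_divide_subdegree)
      then show ?thesis using F False unfolding val_ring_def by simp
    qed (simp add: u_def val_ring_def)
    have "mk2 1 0 (fls_X * u) 1 \<in> I0" unfolding I0_def
      apply (rule CollectI, rule exI[of _ 0], rule exI[of _ 0], rule exI[of _ u], rule exI[of _ 0])
      using u by (simp add: val_ring_def)
    then have "mk2 1 0 (fls_X * u) 1 ** sigma \<in> gen_subgroup (I0 \<union> {sigma})"
      by (auto intro: gen_base gen_mult)
    then have A: "mk2 0 1 fls_X (fls_X * u) \<in> gen_subgroup (I0 \<union> {sigma})"
      by (simp add: sigma_def mk2_mult)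
    obtain w :: "'a fls" where hw: "w * fls_X = 1" using X
      by (metis field_class.field_inverse)
    then have w0: "w \<noteq> 0" by auto
    have hw2: "w * (fls_X * u) = u" by (metis hw mult.assoc mult_1)
    show ?thesis
      apply (rule finish[OF assms _ _ _ A, of "mk2 (-u) w 1 0"])
        apply (simp add: mk2_mult mat1_mk2 hw hw2)
       apply (simp add: det_mk2 w0)
      using F by (simp add: mk2_mult g u_def)
  qed
qed

end
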